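(* Let $n$ entities move in $\mathbb{R}^d$ along piecewise-linear trajectories with vertices at common times $t_0<\dots<t_\tau$, and let $D_\sigma(t)=\max_\psi\|\sigma(t)\psi(t)\|$. The total number of intersections among the functions $D_\sigma$, $\sigma$ ranging over the entities, is $O(\tau n^3)$; here an intersection is a pair $\{\sigma,\psi\}$ together with a time $t$ such that $D_\sigma(t)=D_\psi(t)$ and $t$ is an isolated point of $\{s: D_\sigma(s)=D_\psi(s)\}$.
   Context: $\|pq\|$ denotes Euclidean distance. *)

theory Defs
  imports "HOL-Analysis.Analysis"
begin

(* Points of R^d are represented as functions nat => real; only coordinates i < d matter. *)
definition edist :: "nat \<Rightarrow> (nat \<Rightarrow> real) \<Rightarrow> (nat \<Rightarrow> real) \<Rightarrow> real" where
  "edist d x y = sqrt (\<Sum>i<d. (x i - y i)^2)"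

(* Entities are 0..n-1; P s t is the position of entity s at time t.
   Piecewise linear with vertices at times tm 0 < ... < tm tau. *)
definition piecewise_linear_traj ::
  "nat \<Rightarrow> (nat \<Rightarrow> real) \<Rightarrow> (real \<Rightarrow> nat \<Rightarrow> real) \<Rightarrow> bool" where
  "piecewise_linear_traj tau tm p \<longleftrightarrow>
     (\<forall>k<tau. \<forall>t\<in>{tm k..tm (Suc k)}. \<forall>i.
        p t i = p (tm k) i + (t - tm k) / (tm (Suc k) - tm k) * (p (tm (Suc k)) i - p (tm k) i))"

definition Dfun :: "nat \<Rightarrow> nat \<Rightarrow> (nat \<Rightarrow> real \<Rightarrow> nat \<Rightarrow> real) \<Rightarrow> nat \<Rightarrow> real \<Rightarrow> real" where
  "Dfun d n P s t = Max ((\<lambda>q. edist d (P s t) (P q t)) ` {..<n})"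

definition isolated_pt :: "real \<Rightarrow> real set \<Rightarrow> bool" where
  "isolated_pt t S \<longleftrightarrow> t \<in> S \<and> (\<exists>e>0. \<forall>s\<in>S. s \<noteq> t \<longrightarrow> e \<le> \<bar>s - t\<bar>)"

definition intersections ::
  "nat \<Rightarrow> nat \<Rightarrow> nat \<Rightarrow> (nat \<Rightarrow> real) \<Rightarrow> (nat \<Rightarrow> real \<Rightarrow> nat \<Rightarrow> real) \<Rightarrow> (nat \<times> nat \<times> real) set" where
  "intersections d n tau tm P =
     {(s, q, t). s < q \<and> q < n \<and>
        isolated_pt t {x \<in> {tm 0..tm tau}. Dfun d n P s x = Dfun d n P q x}}"

end

theory Submission
  imports Defs
begin

lemma quad_ident:
  fixes a b c xa xb xc :: real
  shows "a*(xb-xa)*(xc-xb)*(xc-xa) = (xc-xb)*(a*xa^2+b*xa+c) - (xc-xa)*(a*xb^2+b*xb+c) + (xb-xa)*(a*xc^2+b*xc+c)"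
  by (simp add: power2_eq_square algebra_simps)

lemma quad_neg:
  fixes a b c x1 x2 x3 :: real
  assumes "x1 < x2" "x2 < x3" "a*x1^2+b*x1+c \<le> 0" "a*x2^2+b*x2+c > 0" "a*x3^2+b*x3+c \<le> 0"
  shows "a < 0"
proof -
  have p: "(x2-x1)*(x3-x2)*(x3-x1) > 0" using assms by simp
  have 1: "(x3-x2)*(a*x1^2+b*x1+c) \<le> 0" using assms by (simp add: mult_nonneg_nonpos)
  have 2: "(x3-x1)*(a*x2^2+b*x2+c) > 0" using assms by simp
  have 3: "(x2-x1)*(a*x3^2+b*x3+c) \<le> 0" using assms by (simp add: mult_nonneg_nonpos)
  have "a*((x2-x1)*(x3-x2)*(x3-x1)) < 0" using quad_ident[where a=a and b=b and c=c and xa=x1 and xb=x2 and xc=x3] 1 2 3 by (simp only: mult.assoc)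
  thus ?thesis using p by (metis mult_nonneg_nonneg less_le_not_le not_le)
qed

lemma quad_pos:
  fixes a b c x1 x2 x3 :: real
  assumes "x1 < x2" "x2 < x3" "a*x1^2+b*x1+c \<ge> 0" "a*x2^2+b*x2+c \<le> 0" "a*x3^2+b*x3+c > 0"
  shows "a > 0"
proof -
  have p: "(x2-x1)*(x3-x2)*(x3-x1) > 0" using assms by simp
  have 1: "(x3-x2)*(a*x1^2+b*x1+c) \<ge> 0" using assms by simp
  have 2: "(x3-x1)*(a*x2^2+b*x2+c) \<le> 0" using assms by (simp add: mult_nonneg_nonpos)
  have 3: "(x2-x1)*(a*x3^2+b*x3+c) > 0" using assms by simp
  have "a*((x2-x1)*(x3-x2)*(x3-x1)) > 0" using quad_ident[where a=a and b=b and c=c and xa=x1 and xb=x2 and xc=x3] 1 2 3 by (simp only: mult.assoc)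
  thus ?thesis using p by (simp add: zero_less_mult_iff)
qed

lemma quad_deriv:
  fixes a b c x1 x2 :: real
  assumes "x1 < x2" "a*x1^2+b*x1+c = 0" "2*a*x1+b \<le> 0" "a < 0"
  shows "a*x2^2+b*x2+c < 0"
proof -
  have "a*x2^2+b*x2+c = (a*x2^2+b*x2+c) - (a*x1^2+b*x1+c)" using assms by simp
  also have "\<dots> = (x2-x1)*((2*a*x1+b) + a*(x2-x1))" by (simp add: power2_eq_square algebra_simps)
  also have "\<dots> < 0"
  proof -
    have "a*(x2-x1) < 0" using assms by (simp add: mult_neg_pos)
    hence "(2*a*x1+b) + a*(x2-x1) < 0" using assms by linarith
    thus ?thesis using assms by (simp add: mult_pos_neg)
  qed
  finally show ?thesis .
qed

lemma quad_three_roots: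
  fixes a b c x y z :: real
  assumes "x < y" "y < z" "a*x^2+b*x+c = 0" "a*y^2+b*y+c = 0" "a*z^2+b*z+c = 0"
  shows "a = 0 \<and> b = 0 \<and> c = 0"
proof -
  have "a*(y-x)*(z-y)*(z-x) = 0" using quad_ident[where a=a and b=b and c=c and xa=x and xb=y and xc=z] assms by simp
  hence a: "a = 0" using assms by simp
  have "b*x + c = 0" "b*y + c = 0" using assms a by simp_all
  hence "b*y = b*x" by linarith
  hence "b*(y-x) = 0" by (simp add: right_diff_distrib)
  moreover have "y - x \<noteq> 0" using assms by simp
  ultimately have "b = 0" by simp
  thus ?thesis using a assms by simp
qed

lemma argmax_ex:
  fixes g :: "'i \<Rightarrow> real"
  assumes "finite A" "A \<noteq> {}"
  shows "\<exists>i\<in>A. \<forall>c\<in>A. g c \<le> g i"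
proof -
  have "Max (g ` A) \<in> g ` A" using assms by simp
  then obtain i where "i \<in> A" "g i = Max (g ` A)" by auto
  thus ?thesis using assms by (metis Max_ge finite_imageI image_eqI)
qed

definition dom_set :: "('i \<Rightarrow> real \<Rightarrow> real) \<Rightarrow> 'i set \<Rightarrow> real \<Rightarrow> real \<Rightarrow> 'i \<Rightarrow> real set" where
  "dom_set f A al be i = {t \<in> {al..be}. \<forall>c\<in>A. f c t \<le> f i t}"

lemma dom_set_closed:
  assumes fin: "finite A" and i: "i \<in> A"
    and q: "\<forall>i\<in>A. \<forall>t\<in>{al..be}. f i t = ca i * t^2 + cb i * t + cc i"
  shows "closed (dom_set f A al be i)"
proof -
  have "dom_set f A al be i = {al..be} \<inter> (\<Inter>c\<in>A. {t. ca c * t^2 + cb c * t + cc c \<le> ca i * t^2 + cb i * t + cc i})"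
    unfolding dom_set_def using q i by auto
  moreover have "closed ({al..be} \<inter> (\<Inter>c\<in>A. {t. ca c * t^2 + cb c * t + cc c \<le> ca i * t^2 + cb i * t + cc i}))"
  proof (intro closed_Int closed_INT ballI)
    fix c assume "c \<in> A"
    show "closed {t. ca c * t^2 + cb c * t + cc c \<le> ca i * t^2 + cb i * t + cc i}"
      by (intro closed_Collect_le continuous_intros)
  qed simp
  ultimately show ?thesis by simp
qed

lemma dom_set_bdd: "bdd_below (dom_set f A al be i)" "bdd_above (dom_set f A al be i)"
  unfolding dom_set_def by (rule bdd_below_mono[OF bdd_below_Icc], blast) (rule bdd_above_mono[OF bdd_above_Icc], blast)

lemma select:
  fixes f :: "'i \<Rightarrow> real \<Rightarrow> real"
  assumes fin: "finite A" and ne: "A \<noteq> {}" and ab: "al \<le> be"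
    and q: "\<forall>i\<in>A. \<forall>t\<in>{al..be}. f i t = ca i * t^2 + cb i * t + cc i"
  shows "\<exists>b\<in>A. \<forall>t1 t2 t3. t1 \<in> dom_set f A al be b \<longrightarrow> t3 \<in> dom_set f A al be b \<longrightarrow> t1 < t2 \<longrightarrow> t2 < t3
             \<longrightarrow> t2 \<in> dom_set f A al be b"
proof -
  define S where "S = dom_set f A al be"
  have Sinf: "Inf (S i) \<in> S i" if "i \<in> A" "S i \<noteq> {}" for i
    using closed_contains_Inf[of "S i"] dom_set_closed[OF fin that(1) q] dom_set_bdd(1)[of f A al be i] that unfolding S_def by blast
  have Sle: "Inf (S i) \<le> t" if "t \<in> S i" for i t
    using cInf_lower[OF that] dom_set_bdd(1)[of f A al be i] unfolding S_def by simp
  define T where "T = {i\<in>A. S i \<noteq> {}}"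
  obtain i0 where i0: "i0 \<in> A" "\<forall>c\<in>A. f c al \<le> f i0 al" using argmax_ex[OF fin ne, of "\<lambda>c. f c al"] by blast
  have "al \<in> S i0" unfolding S_def dom_set_def using i0 ab by auto
  hence Tne: "T \<noteq> {}" unfolding T_def using i0 by auto
  have Tfin: "finite T" unfolding T_def using fin by simp
  obtain b0 where b0: "b0 \<in> T" "\<forall>c\<in>T. Inf (S c) \<le> Inf (S b0)" using argmax_ex[OF Tfin Tne, of "\<lambda>i. Inf (S i)"] by blast
  define M where "M = Inf (S b0)"
  define TM where "TM = {i\<in>T. Inf (S i) = M}"
  have TMne: "TM \<noteq> {}" using b0 unfolding TM_def M_def by auto
  have TMfin: "finite TM" unfolding TM_def using Tfin by simp
  obtain b where b: "b \<in> TM" "\<forall>c\<in>TM. 2*ca c*M + cb c \<le> 2*ca b*M + cb b"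
    using argmax_ex[OF TMfin TMne, of "\<lambda>i. 2*ca i*M + cb i"] by blast
  have bA: "b \<in> A" and bT: "b \<in> T" and bM: "Inf (S b) = M" using b unfolding TM_def T_def by auto
  have "\<forall>t1 t2 t3. t1 \<in> S b \<longrightarrow> t3 \<in> S b \<longrightarrow> t1 < t2 \<longrightarrow> t2 < t3 \<longrightarrow> t2 \<in> S b"
  proof (intro allI impI, rule ccontr)
    fix t1 t2 t3 assume t1: "t1 \<in> S b" and t3: "t3 \<in> S b" and lt: "t1 < t2" "t2 < t3" and n2: "t2 \<notin> S b"
    have I1: "t1 \<in> {al..be}" and I3: "t3 \<in> {al..be}" using t1 t3 unfolding S_def dom_set_def by auto
    have I2: "t2 \<in> {al..be}" using I1 I3 lt by auto
    obtain c where c: "c \<in> A" "\<forall>c'\<in>A. f c' t2 \<le> f c t2" using argmax_ex[OF fin ne, of "\<lambda>c. f c t2"] by blast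
    have t2c: "t2 \<in> S c" unfolding S_def dom_set_def using I2 c by auto
    have "\<exists>c'\<in>A. f c' t2 > f b t2" using n2 I2 unfolding S_def dom_set_def by (auto simp: not_le)
    hence h2: "f c t2 > f b t2" using c by force
    have cT: "c \<in> T" unfolding T_def using c t2c by auto
    define u where "u = Inf (S c)"
    have uS: "u \<in> S c" using Sinf[of c] cT unfolding u_def T_def by auto
    have uM: "u \<le> M" using b0 cT unfolding u_def M_def by auto
    have Mt1: "M \<le> t1" using Sle[OF t1] bM by simp
    have Iu: "u \<in> {al..be}" using uS unfolding S_def dom_set_def by auto
    have hu: "f c u \<ge> f b u" using uS bA unfolding S_def dom_set_def by auto
    have h1: "f c t1 \<le> f b t1" using t1 c unfolding S_def dom_set_def by auto
    have h3: "f c t3 \<le> f b t3" using t3 c unfolding S_def dom_set_def by auto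
    define a' where "a' = ca c - ca b"
    define b' where "b' = cb c - cb b"
    define c' where "c' = cc c - cc b"
    have hq: "f c t - f b t = a' * t^2 + b' * t + c'" if "t \<in> {al..be}" for t
      using q c(1) bA that unfolding a'_def b'_def c'_def by (simp add: algebra_simps)
    have aneg: "a' < 0"
      using quad_neg[of t1 t2 t3 a' b' c'] lt hq[OF I1] hq[OF I2] hq[OF I3] h1 h2 h3 by linarith
    show False
    proof (cases "u < t1")
      case True
      have "a' > 0"
        using quad_pos[of u t1 t2 a' b' c'] True lt hq[OF I1] hq[OF I2] hq[OF Iu] h1 h2 hu by linarith
      thus False using aneg by simp
    next
      case False
      hence ut: "u = t1" "M = t1" using uM Mt1 by linarith+
      have "c \<in> TM" unfolding TM_def using cT ut u_def by auto
      hence der: "2*a'*t1 + b' \<le> 0" using b(2) ut unfolding a'_def b'_def by (simp add: algebra_simps)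
      have z: "a'*t1^2 + b'*t1 + c' = 0" using hq[OF I1] hq[OF Iu] ut h1 hu by simp
      have "a'*t2^2 + b'*t2 + c' < 0" using quad_deriv[OF lt(1) z der aneg] .
      thus False using hq[OF I2] h2 by linarith
    qed
  qed
  thus ?thesis using bA unfolding S_def by blast
qed

lemma envelope:
  fixes f :: "'i \<Rightarrow> real \<Rightarrow> real"
  assumes "finite A" "A \<noteq> {}" "al \<le> be"
    and "\<forall>i\<in>A. \<forall>t\<in>{al..be}. f i t = ca i * t^2 + cb i * t + cc i"
  shows "\<exists>K. finite K \<and> card K \<le> 2 * card A \<and>
     (\<forall>x y. al \<le> x \<longrightarrow> x \<le> y \<longrightarrow> y \<le> be \<longrightarrow> {x..y} \<inter> K = {} \<longrightarrow>
        (\<exists>i\<in>A. \<forall>t\<in>{x..y}. Max ((\<lambda>j. f j t) ` A) = f i t))"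
  using assms
proof (induction "card A" arbitrary: A rule: less_induct)
  case less
  note fin = less.prems(1) and ne = less.prems(2) and ab = less.prems(3) and q = less.prems(4)
  show ?case
  proof (cases "card A = 1")
    case True
    then obtain i where A: "A = {i}" by (auto simp: card_Suc_eq)
    show ?thesis by (rule exI[of _ "{}"]) (auto simp: A)
  next
    case False
    obtain b where bA: "b \<in> A" and conv: "\<forall>t1 t2 t3. t1 \<in> dom_set f A al be b \<longrightarrow> t3 \<in> dom_set f A al be b \<longrightarrow> t1 < t2 \<longrightarrow> t2 < t3
             \<longrightarrow> t2 \<in> dom_set f A al be b"
      using select[OF fin ne ab q] by blast
    define A' where "A' = A - {b}"
    have cA: "card A' < card A" unfolding A'_def using bA fin by (meson card_Diff1_less)
    have cA2: "card A = Suc (card A')" unfolding A'_def using bA fin by (metis card_Suc_Diff1)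
    have fin': "finite A'" unfolding A'_def using fin by simp
    have ne': "A' \<noteq> {}" using False cA2 ne by (metis card.empty One_nat_def)
    have q': "\<forall>i\<in>A'. \<forall>t\<in>{al..be}. f i t = ca i * t^2 + cb i * t + cc i" using q unfolding A'_def by auto
    obtain K' where K': "finite K'" "card K' \<le> 2 * card A'"
      "\<forall>x y. al \<le> x \<longrightarrow> x \<le> y \<longrightarrow> y \<le> be \<longrightarrow> {x..y} \<inter> K' = {} \<longrightarrow>
        (\<exists>i\<in>A'. \<forall>t\<in>{x..y}. Max ((\<lambda>j. f j t) ` A') = f i t)"
      using less.hyps[OF cA fin' ne' ab q'] by blast
    define S where "S = dom_set f A al be b"
    have Aeq: "A = insert b A'" unfolding A'_def using bA by auto
    have maxA: "Max ((\<lambda>j. f j t) ` A) = max (f b t) (Max ((\<lambda>j. f j t) ` A'))" for t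
      unfolding Aeq using fin' ne' by simp
    have outS: "Max ((\<lambda>j. f j t) ` A) = Max ((\<lambda>j. f j t) ` A')" if tI: "t \<in> {al..be}" and tS: "t \<notin> S" for t
    proof -
      have "\<exists>c\<in>A. f c t > f b t" using tI tS unfolding S_def dom_set_def by (auto simp: not_le)
      then obtain c where c: "c \<in> A" "f c t > f b t" by blast
      hence "c \<in> A'" unfolding A'_def by auto
      hence "f c t \<le> Max ((\<lambda>j. f j t) ` A')" using fin' by simp
      thus ?thesis using maxA[of t] c by simp
    qed
    have inS: "Max ((\<lambda>j. f j t) ` A) = f b t" if "t \<in> S" for t
    proof -
      have "\<forall>c\<in>A'. f c t \<le> f b t" using that unfolding S_def dom_set_def A'_def by auto
      hence "Max ((\<lambda>j. f j t) ` A') \<le> f b t" using fin' ne' by simp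
      thus ?thesis using maxA[of t] by simp
    qed
    show ?thesis
    proof (cases "S = {}")
      case True
      show ?thesis
      proof (rule exI[of _ K'], intro conjI allI impI)
        show "finite K'" by fact
        show "card K' \<le> 2 * card A" using K'(2) cA by simp
        fix x y assume xy: "al \<le> x" "x \<le> y" "y \<le> be" "{x..y} \<inter> K' = {}"
        then obtain i where i: "i \<in> A'" "\<forall>t\<in>{x..y}. Max ((\<lambda>j. f j t) ` A') = f i t" using K'(3) by blast
        have "\<forall>t\<in>{x..y}. Max ((\<lambda>j. f j t) ` A) = f i t"
        proof
          fix t assume tt: "t \<in> {x..y}"
          hence "t \<in> {al..be}" using xy by auto
          thus "Max ((\<lambda>j. f j t) ` A) = f i t" using outS[of t] True i(2) tt by simp
        qed
        thus "\<exists>i\<in>A. \<forall>t\<in>{x..y}. Max ((\<lambda>j. f j t) ` A) = f i t" using i(1) unfolding A'_def by auto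
      qed
    next
      case Sne: False
      have clS: "closed S" unfolding S_def using dom_set_closed[OF fin bA q] .
      have bb: "bdd_below S" "bdd_above S" unfolding S_def by (rule dom_set_bdd)+
      have lS: "Inf S \<in> S" by (rule closed_contains_Inf[OF Sne bb(1) clS])
      have rS: "Sup S \<in> S" by (rule closed_contains_Sup[OF Sne bb(2) clS])
      have lle: "Inf S \<le> t" if "t \<in> S" for t using cInf_lower[OF that bb(1)] .
      have rle: "t \<le> Sup S" if "t \<in> S" for t using cSup_upper[OF that bb(2)] .
      show ?thesis
      proof (rule exI[of _ "insert (Inf S) (insert (Sup S) K')"], intro conjI allI impI)
        show "finite (insert (Inf S) (insert (Sup S) K'))" using K'(1) by simp
        have "card (insert (Inf S) (insert (Sup S) K')) \<le> Suc (Suc (card K'))"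
          using K'(1) by (simp add: card_insert_if)
        thus "card (insert (Inf S) (insert (Sup S) K')) \<le> 2 * card A" using K'(2) cA2 by simp
        fix x y assume xy: "al \<le> x" "x \<le> y" "y \<le> be" "{x..y} \<inter> insert (Inf S) (insert (Sup S) K') = {}"
        have xyK: "{x..y} \<inter> K' = {}" using xy(4) by auto
        have lnot: "Inf S \<notin> {x..y}" and rnot: "Sup S \<notin> {x..y}" using xy(4) by auto
        show "\<exists>i\<in>A. \<forall>t\<in>{x..y}. Max ((\<lambda>j. f j t) ` A) = f i t"
        proof (cases "y < Inf S \<or> Sup S < x")
          case True
          obtain i where i: "i \<in> A'" "\<forall>t\<in>{x..y}. Max ((\<lambda>j. f j t) ` A') = f i t" using K'(3) xy(1-3) xyK by blast
          have "t \<notin> S" if tt: "t \<in> {x..y}" for t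
          proof
            assume "t \<in> S"
            hence "Inf S \<le> t" "t \<le> Sup S" using lle rle by auto
            thus False using tt True by auto
          qed
          hence "\<forall>t\<in>{x..y}. Max ((\<lambda>j. f j t) ` A) = f i t"
            using i(2) outS xy(1,3) by (metis atLeastAtMost_iff order_trans)
          thus ?thesis using i(1) unfolding A'_def by auto
        next
          case False
          have "Inf S < x" "y < Sup S" using lnot rnot xy(2) False by (auto simp: not_less)
          hence inS2: "t \<in> S" if tt: "t \<in> {x..y}" for t
          proof -
            have "Inf S < t" "t < Sup S" using tt \<open>Inf S < x\<close> \<open>y < Sup S\<close> by auto
            thus ?thesis using conv lS rS unfolding S_def by blast
          qed
          hence "\<forall>t\<in>{x..y}. Max ((\<lambda>j. f j t) ` A) = f b t" using inS by blast
          thus ?thesis using bA by blast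
        qed
      qed
    qed
  qed
qed

lemma no_three:
  fixes S :: "real set"
  assumes h: "\<And>x y z. x \<in> S \<Longrightarrow> y \<in> S \<Longrightarrow> z \<in> S \<Longrightarrow> x < y \<Longrightarrow> y < z \<Longrightarrow> False"
  shows "finite S \<and> card S \<le> 2"
proof (rule ccontr)
  assume "\<not> (finite S \<and> card S \<le> 2)"
  then obtain B where B: "B \<subseteq> S" "card B = 3"
  proof (cases "finite S")
    case True
    hence "3 \<le> card S" using \<open>\<not> (finite S \<and> card S \<le> 2)\<close> by simp
    thus ?thesis using that obtain_subset_with_card_n by metis
  next
    case False
    thus ?thesis using that infinite_arbitrarily_large by metis
  qed
  then obtain x y z where xyz: "B = {x,y,z}" "x \<noteq> y" "y \<noteq> z" "x \<noteq> z" by (auto simp: card_3_iff)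
  have s: "x \<in> S" "y \<in> S" "z \<in> S" using B xyz by auto
  have "\<not> (x<y \<and> y<z)" "\<not> (x<z \<and> z<y)" "\<not> (y<x \<and> x<z)" "\<not> (y<z \<and> z<x)" "\<not> (z<x \<and> x<y)" "\<not> (z<y \<and> y<x)"
    using h[of x y z] h[of x z y] h[of y x z] h[of y z x] h[of z x y] h[of z y x] s by auto
  thus False using xyz by linarith
qed

lemma count_iso:
  fixes F G :: "real \<Rightarrow> real"
  assumes fK: "finite K" and bK: "be \<in> K"
   and pieces: "\<forall>x y. al \<le> x \<longrightarrow> x \<le> y \<longrightarrow> y \<le> be \<longrightarrow> {x..y} \<inter> K = {} \<longrightarrow>
        (\<exists>a b c. \<forall>t\<in>{x..y}. (F t = G t \<longleftrightarrow> a*t^2+b*t+c = 0))"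
  shows "finite {t\<in>{al..be}. isolated_pt t {x\<in>{al..be}. F x = G x}} \<and>
         card {t\<in>{al..be}. isolated_pt t {x\<in>{al..be}. F x = G x}} \<le> 3 * card K"
proof -
  define E where "E = {x\<in>{al..be}. F x = G x}"
  define Z where "Z = {t\<in>{al..be}. isolated_pt t E}"
  define Z' where "Z' = Z - K"
  define g where "g z = Min {k\<in>K. z < k}" for z
  have gprop: "g z \<in> K \<and> z < g z \<and> (\<forall>k\<in>K. z < k \<longrightarrow> g z \<le> k)" if zZ: "z \<in> Z'" for z
  proof -
    have "z \<in> {al..be}" "z \<notin> K" using zZ unfolding Z'_def Z_def by auto
    hence "z < be" using bK by (cases "z = be") auto
    hence ne: "{k\<in>K. z < k} \<noteq> {}" using bK by auto
    have fin: "finite {k\<in>K. z < k}" using fK by simp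
    have "g z \<in> {k\<in>K. z < k}" unfolding g_def using Min_in[OF fin ne] .
    moreover have "\<forall>k\<in>K. z < k \<longrightarrow> g z \<le> k" unfolding g_def using Min_le[OF fin] by blast
    ultimately show ?thesis by blast
  qed
  define fib where "fib k = {z\<in>Z'. g z = k}" for k
  have fibb: "finite (fib k) \<and> card (fib k) \<le> 2" for k
  proof (rule no_three)
    fix z1 z2 z3 assume z: "z1 \<in> fib k" "z2 \<in> fib k" "z3 \<in> fib k" "z1 < z2" "z2 < z3"
    have zZ: "z1 \<in> Z'" "z2 \<in> Z'" "z3 \<in> Z'" "g z1 = k" "g z3 = k" using z unfolding fib_def by auto
    have zI: "z1 \<in> {al..be}" "z2 \<in> {al..be}" "z3 \<in> {al..be}" using zZ unfolding Z'_def Z_def by auto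
    have zE: "z1 \<in> E" "z2 \<in> E" "z3 \<in> E" using zZ unfolding Z'_def Z_def isolated_pt_def by auto
    have disj: "{z1..z3} \<inter> K = {}"
    proof (rule ccontr)
      assume "{z1..z3} \<inter> K \<noteq> {}"
      then obtain k' where k': "k' \<in> K" "z1 \<le> k'" "k' \<le> z3" by auto
      have "z1 \<notin> K" using zZ unfolding Z'_def by auto
      hence "z1 < k'" using k' by (cases "z1 = k'") auto
      hence "k \<le> k'" using gprop[OF zZ(1)] k'(1) zZ(4) by auto
      moreover have "z3 < k" using gprop[OF zZ(3)] zZ(5) by auto
      ultimately show False using k' by linarith
    qed
    obtain a b c where abc: "\<forall>t\<in>{z1..z3}. (F t = G t \<longleftrightarrow> a*t^2+b*t+c = 0)"
    proof -
      have "al \<le> z1" "z1 \<le> z3" "z3 \<le> be" using zI z by auto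
      thus ?thesis using pieces disj that by blast
    qed
    have "a*z1^2+b*z1+c = 0" "a*z2^2+b*z2+c = 0" "a*z3^2+b*z3+c = 0"
      using abc zE z unfolding E_def by auto
    hence zero: "a = 0 \<and> b = 0 \<and> c = 0" using quad_three_roots z(4,5) by blast
    have allE: "t \<in> E" if "t \<in> {z1..z3}" for t
      using abc zero that zI unfolding E_def by auto
    have "isolated_pt z2 E" using zZ unfolding Z'_def Z_def by auto
    then obtain e where e: "e > 0" "\<forall>s\<in>E. s \<noteq> z2 \<longrightarrow> e \<le> \<bar>s - z2\<bar>" unfolding isolated_pt_def by auto
    define mu where "mu = min e (z3 - z2)"
    define s where "s = z2 + mu / 2"
    have m: "0 < mu" "mu \<le> z3 - z2" "mu \<le> e" unfolding mu_def using e(1) z(4,5) by auto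
    have "s \<in> {z1..z3}" "s \<noteq> z2" "\<bar>s - z2\<bar> < e" unfolding s_def using m z(4,5) by auto
    hence "s \<in> E" using allE by blast
    thus False using e \<open>s \<noteq> z2\<close> \<open>\<bar>s - z2\<bar> < e\<close> by fastforce
  qed
  have sub: "Z' \<subseteq> (\<Union>k\<in>K. fib k)" unfolding fib_def using gprop by auto
  have finZ': "finite Z'" using finite_subset[OF sub] fK fibb by blast
  have "card Z' \<le> card (\<Union>k\<in>K. fib k)" using card_mono[OF _ sub] fK fibb by blast
  also have "\<dots> \<le> (\<Sum>k\<in>K. card (fib k))" using card_UN_le[OF fK] .
  also have "\<dots> \<le> (\<Sum>k\<in>K. 2)" using fibb by (intro sum_mono) blast
  finally have cZ': "card Z' \<le> 2 * card K" by simp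
  have Zeq: "Z = (Z \<inter> K) \<union> Z'" unfolding Z'_def by auto
  have finZ: "finite Z" using Zeq finZ' fK by (metis finite_Int finite_UnI)
  have "card Z \<le> card (Z \<inter> K) + card Z'" using Zeq card_Un_le by metis
  also have "\<dots> \<le> card K + card Z'" using card_mono[OF fK] by simp
  finally have "card Z \<le> 3 * card K" using cZ' by simp
  thus ?thesis using finZ unfolding Z_def E_def by simp
qed

lemma envelope':
  fixes f :: "'i \<Rightarrow> real \<Rightarrow> real"
  assumes "finite A" "A \<noteq> {}" "al \<le> be"
    and q: "\<forall>i\<in>A. \<exists>a b c. \<forall>t\<in>{al..be}. f i t = a * t^2 + b * t + c"
  shows "\<exists>K. finite K \<and> card K \<le> 2 * card A \<and>
     (\<forall>x y. al \<le> x \<longrightarrow> x \<le> y \<longrightarrow> y \<le> be \<longrightarrow> {x..y} \<inter> K = {} \<longrightarrow>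
        (\<exists>i\<in>A. \<forall>t\<in>{x..y}. Max ((\<lambda>j. f j t) ` A) = f i t))"
proof -
  have "\<forall>i\<in>A. \<exists>abc. \<forall>t\<in>{al..be}. f i t = fst abc * t^2 + fst (snd abc) * t + snd (snd abc)"
    using q by force
  then obtain h where h: "\<forall>i\<in>A. \<forall>t\<in>{al..be}. f i t = fst (h i) * t^2 + fst (snd (h i)) * t + snd (snd (h i))"
    by (metis bchoice)
  show ?thesis by (rule envelope[OF assms(1-3) h])
qed

lemma Dfun_sqrt:
  assumes "n > 0"
  shows "Dfun d n P s t = sqrt (Max ((\<lambda>q. \<Sum>i<d. (P s t i - P q t i)^2) ` {..<n}))"
proof -
  have m: "mono sqrt" by (rule monoI) simp
  have "Dfun d n P s t = Max (sqrt ` ((\<lambda>q. \<Sum>i<d. (P s t i - P q t i)^2) ` {..<n}))"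
    unfolding Dfun_def edist_def image_image by simp
  also have "\<dots> = sqrt (Max ((\<lambda>q. \<Sum>i<d. (P s t i - P q t i)^2) ` {..<n}))"
    by (rule mono_Max_commute[OF m, symmetric]) (use assms in auto)
  finally show ?thesis .
qed

lemma seg_quad:
  assumes k: "k < tau" and lt: "tm k < tm (Suc k)"
    and ps: "piecewise_linear_traj tau tm (P s)" and pq: "piecewise_linear_traj tau tm (P q)"
  shows "\<exists>a b c. \<forall>t\<in>{tm k..tm (Suc k)}. (\<Sum>i<d. (P s t i - P q t i)^2) = a*t^2+b*t+c"
proof -
  define t0 where "t0 = tm k"
  define t1 where "t1 = tm (Suc k)"
  define al where "al i = ((P s t1 i - P s t0 i) - (P q t1 i - P q t0 i)) / (t1 - t0)" for i
  define bt where "bt i = (P s t0 i - P q t0 i) - t0 * al i" for i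
  have ne: "t1 - t0 \<noteq> 0" using lt unfolding t0_def t1_def by simp
  have lin: "P s t i - P q t i = al i * t + bt i" if t: "t \<in> {tm k..tm (Suc k)}" for t i
  proof -
    have "P s t i = P s t0 i + (t - t0) / (t1 - t0) * (P s t1 i - P s t0 i)"
      using ps k t unfolding piecewise_linear_traj_def t0_def t1_def by blast
    moreover have "P q t i = P q t0 i + (t - t0) / (t1 - t0) * (P q t1 i - P q t0 i)"
      using pq k t unfolding piecewise_linear_traj_def t0_def t1_def by blast
    moreover have "al i * t + bt i = (P s t0 i - P q t0 i) + (t - t0) * al i"
      unfolding bt_def by (simp add: algebra_simps)
    moreover have "(t - t0) * al i = (t - t0) / (t1 - t0) * ((P s t1 i - P s t0 i) - (P q t1 i - P q t0 i))"
      unfolding al_def by simp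
    ultimately show ?thesis by (simp add: algebra_simps)
  qed
  have sq: "(al i * t + bt i)^2 = (al i)^2 * t^2 + (2 * al i * bt i) * t + (bt i)^2" for i t
    by (simp add: power2_eq_square algebra_simps)
  show ?thesis
  proof (intro exI ballI)
    fix t assume t: "t \<in> {tm k..tm (Suc k)}"
    have "(\<Sum>i<d. (P s t i - P q t i)^2) = (\<Sum>i<d. (al i)^2 * t^2 + (2 * al i * bt i) * t + (bt i)^2)"
      using lin[OF t] sq by simp
    also have "\<dots> = (\<Sum>i<d. (al i)^2) * t^2 + (\<Sum>i<d. 2 * al i * bt i) * t + (\<Sum>i<d. (bt i)^2)"
      by (simp add: sum.distrib sum_distrib_right)
    finally show "(\<Sum>i<d. (P s t i - P q t i)^2) = (\<Sum>i<d. (al i)^2) * t^2 + (\<Sum>i<d. 2 * al i * bt i) * t + (\<Sum>i<d. (bt i)^2)" .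
  qed
qed

lemma pair_seg:
  assumes sn: "s < n" and qn: "q < n" and k: "k < tau" and lt: "tm k < tm (Suc k)"
    and pl: "\<forall>s<n. piecewise_linear_traj tau tm (P s)"
  shows "finite {t\<in>{tm k..tm (Suc k)}. isolated_pt t {x\<in>{tm k..tm (Suc k)}. Dfun d n P s x = Dfun d n P q x}} \<and>
         card {t\<in>{tm k..tm (Suc k)}. isolated_pt t {x\<in>{tm k..tm (Suc k)}. Dfun d n P s x = Dfun d n P q x}} \<le> 12*n+3"
proof -
  define al where "al = tm k"
  define be where "be = tm (Suc k)"
  have ab: "al \<le> be" using lt unfolding al_def be_def by simp
  define g where "g r j t = (\<Sum>i<d. (P r t i - P j t i)^2)" for r j t
  have npos: "n > 0" using sn by simp
  have Dg: "Dfun d n P r t = sqrt (Max ((\<lambda>j. g r j t) ` {..<n}))" for r t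
    unfolding g_def by (rule Dfun_sqrt[OF npos])
  have quad: "\<exists>a b c. \<forall>t\<in>{al..be}. g r j t = a*t^2+b*t+c" if "r < n" "j < n" for r j
  proof -
    have "piecewise_linear_traj tau tm (P r)" "piecewise_linear_traj tau tm (P j)" using pl that by auto
    from seg_quad[OF k lt this] show ?thesis unfolding g_def al_def be_def .
  qed
  have envr: "\<exists>K. finite K \<and> card K \<le> 2 * n \<and>
     (\<forall>x y. al \<le> x \<longrightarrow> x \<le> y \<longrightarrow> y \<le> be \<longrightarrow> {x..y} \<inter> K = {} \<longrightarrow>
        (\<exists>i\<in>{..<n}. \<forall>t\<in>{x..y}. Max ((\<lambda>j. g r j t) ` {..<n}) = g r i t))" if "r < n" for r
  proof -
    have qq: "\<forall>j\<in>{..<n}. \<exists>a b c. \<forall>t\<in>{al..be}. g r j t = a*t^2+b*t+c" using quad[OF that] by blast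
    have ne: "{..<n} \<noteq> {}" using npos by auto
    show ?thesis using envelope'[OF finite_lessThan ne ab qq] by (simp only: card_lessThan)
  qed
  obtain Ks where Ks: "finite Ks" "card Ks \<le> 2 * n"
     "\<forall>x y. al \<le> x \<longrightarrow> x \<le> y \<longrightarrow> y \<le> be \<longrightarrow> {x..y} \<inter> Ks = {} \<longrightarrow>
        (\<exists>i\<in>{..<n}. \<forall>t\<in>{x..y}. Max ((\<lambda>j. g s j t) ` {..<n}) = g s i t)"
    using envr[OF sn] by blast
  obtain Kq where Kq: "finite Kq" "card Kq \<le> 2 * n"
     "\<forall>x y. al \<le> x \<longrightarrow> x \<le> y \<longrightarrow> y \<le> be \<longrightarrow> {x..y} \<inter> Kq = {} \<longrightarrow>
        (\<exists>i\<in>{..<n}. \<forall>t\<in>{x..y}. Max ((\<lambda>j. g q j t) ` {..<n}) = g q i t)"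
    using envr[OF qn] by blast
  define K where "K = insert be (Ks \<union> Kq)"
  have fK: "finite K" unfolding K_def using Ks Kq by simp
  have "card K \<le> Suc (card (Ks \<union> Kq))" unfolding K_def using Ks(1) Kq(1) by (simp add: card_insert_if)
  also have "\<dots> \<le> Suc (card Ks + card Kq)" using card_Un_le by simp
  finally have cK: "card K \<le> 4 * n + 1" using Ks(2) Kq(2) by simp
  have pieces: "\<forall>x y. al \<le> x \<longrightarrow> x \<le> y \<longrightarrow> y \<le> be \<longrightarrow> {x..y} \<inter> K = {} \<longrightarrow>
        (\<exists>a b c. \<forall>t\<in>{x..y}. (Dfun d n P s t = Dfun d n P q t \<longleftrightarrow> a*t^2+b*t+c = 0))"
  proof (intro allI impI)
    fix x y assume xy: "al \<le> x" "x \<le> y" "y \<le> be" "{x..y} \<inter> K = {}"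
    have "{x..y} \<inter> Ks = {}" "{x..y} \<inter> Kq = {}" using xy(4) unfolding K_def by auto
    then obtain i j where i: "i < n" "\<forall>t\<in>{x..y}. Max ((\<lambda>j. g s j t) ` {..<n}) = g s i t"
      and j: "j < n" "\<forall>t\<in>{x..y}. Max ((\<lambda>j'. g q j' t) ` {..<n}) = g q j t"
    proof -
      obtain i where "i \<in> {..<n}" "\<forall>t\<in>{x..y}. Max ((\<lambda>j. g s j t) ` {..<n}) = g s i t"
        using Ks(3) xy(1-3) \<open>{x..y} \<inter> Ks = {}\<close> by blast
      moreover obtain j where "j \<in> {..<n}" "\<forall>t\<in>{x..y}. Max ((\<lambda>j'. g q j' t) ` {..<n}) = g q j t"
        using Kq(3) xy(1-3) \<open>{x..y} \<inter> Kq = {}\<close> by blast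
      ultimately show ?thesis using that by blast
    qed
    obtain a b c where abc: "\<forall>t\<in>{al..be}. g s i t = a*t^2+b*t+c" using quad[OF sn i(1)] by blast
    obtain a' b' c' where abc': "\<forall>t\<in>{al..be}. g q j t = a'*t^2+b'*t+c'" using quad[OF qn j(1)] by blast
    show "\<exists>a b c. \<forall>t\<in>{x..y}. (Dfun d n P s t = Dfun d n P q t \<longleftrightarrow> a*t^2+b*t+c = 0)"
    proof (intro exI ballI)
      fix t assume t: "t \<in> {x..y}"
      hence tI: "t \<in> {al..be}" using xy by auto
      have "Dfun d n P s t = sqrt (a*t^2+b*t+c)" using Dg[of s t] i(2) t abc tI by simp
      moreover have "Dfun d n P q t = sqrt (a'*t^2+b'*t+c')" using Dg[of q t] j(2) t abc' tI by simp
      ultimately have "Dfun d n P s t = sqrt (a*t^2+b*t+c)" "Dfun d n P q t = sqrt (a'*t^2+b'*t+c')" by auto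
      show "Dfun d n P s t = Dfun d n P q t \<longleftrightarrow> (a-a')*t^2+(b-b')*t+(c-c') = 0"
      proof -
        have "sqrt (a*t^2+b*t+c) = sqrt (a'*t^2+b'*t+c') \<longleftrightarrow> a*t^2+b*t+c = a'*t^2+b'*t+c'" by simp
        also have "\<dots> \<longleftrightarrow> (a-a')*t^2+(b-b')*t+(c-c') = 0" by (simp add: algebra_simps)
        finally show ?thesis using \<open>Dfun d n P s t = sqrt (a*t^2+b*t+c)\<close> \<open>Dfun d n P q t = sqrt (a'*t^2+b'*t+c')\<close> by simp
      qed
    qed
  qed
  have "be \<in> K" unfolding K_def by simp
  note C = count_iso[OF fK this pieces]
  have "3 * card K \<le> 12 * n + 3" using cK by simp
  thus ?thesis using C unfolding al_def be_def by (meson order_trans)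
qed

lemma mono_tm:
  assumes inc: "\<forall>k<tau. tm k < tm (Suc k)"
  shows "i \<le> j \<Longrightarrow> j \<le> tau \<Longrightarrow> tm i \<le> (tm j :: real)"
proof (induction j)
  case 0 thus ?case by simp
next
  case (Suc j)
  show ?case
  proof (cases "i = Suc j")
    case True thus ?thesis by simp
  next
    case False
    hence "i \<le> j" using Suc.prems by simp
    hence "tm i \<le> tm j" using Suc by simp
    moreover have "tm j < tm (Suc j)" using inc Suc.prems by simp
    ultimately show ?thesis by simp
  qed
qed

lemma seg_cover:
  fixes tm :: "nat \<Rightarrow> real"
  assumes inc: "\<forall>k<tau. tm k < tm (Suc k)" and tau: "tau \<ge> 1" and t: "t \<in> {tm 0..tm tau}"
  shows "\<exists>k<tau. t \<in> {tm k..tm (Suc k)}"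
proof -
  define A where "A = {k. k < tau \<and> tm k \<le> t}"
  have finA: "finite A" unfolding A_def by simp
  have "0 \<in> A" unfolding A_def using tau t by auto
  hence neA: "A \<noteq> {}" by auto
  define k where "k = Max A"
  have kA: "k \<in> A" unfolding k_def using Max_in[OF finA neA] .
  have kmax: "\<forall>j\<in>A. j \<le> k" unfolding k_def using Max_ge[OF finA] by blast
  have k1: "k < tau" "tm k \<le> t" using kA unfolding A_def by auto
  have "t \<le> tm (Suc k)"
  proof (cases "Suc k = tau")
    case True thus ?thesis using t by simp
  next
    case False
    hence "Suc k < tau" using k1 by simp
    hence "Suc k \<notin> A" using kmax by auto
    hence "\<not> tm (Suc k) \<le> t" using \<open>Suc k < tau\<close> unfolding A_def by auto
    thus ?thesis by linarith
  qed
  thus ?thesis using k1 by auto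
qed

lemma iso_sub: "isolated_pt t S \<Longrightarrow> t \<in> S' \<Longrightarrow> S' \<subseteq> S \<Longrightarrow> isolated_pt t S'"
  unfolding isolated_pt_def by blast

theorem mainTheorem11:
  shows "\<exists>C::real. \<forall>(d::nat) (n::nat) (tau::nat) (tm::nat \<Rightarrow> real) (P::nat \<Rightarrow> real \<Rightarrow> nat \<Rightarrow> real).
     tau \<ge> 1 \<longrightarrow> (\<forall>k<tau. tm k < tm (Suc k)) \<longrightarrow>
     (\<forall>s<n. piecewise_linear_traj tau tm (P s)) \<longrightarrow>
     finite (intersections d n tau tm P) \<and>
     real (card (intersections d n tau tm P)) \<le> C * real tau * real n ^ 3"
proof (rule exI[of _ 15], intro allI impI)
  fix d n tau :: nat and tm :: "nat \<Rightarrow> real" and P :: "nat \<Rightarrow> real \<Rightarrow> nat \<Rightarrow> real"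
  assume tau: "tau \<ge> 1" and inc: "\<forall>k<tau. tm k < tm (Suc k)" and pl: "\<forall>s<n. piecewise_linear_traj tau tm (P s)"
  define Z where "Z s q k = {t\<in>{tm k..tm (Suc k)}. isolated_pt t {x\<in>{tm k..tm (Suc k)}. Dfun d n P s x = Dfun d n P q x}}" for s q k
  define X where "X = {..<tau} \<times> {..<n} \<times> {..<n}"
  define W where "W x = (\<lambda>t. (fst (snd x), snd (snd x), t)) ` Z (fst (snd x)) (snd (snd x)) (fst x)" for x
  have finX: "finite X" unfolding X_def by simp
  have ZB: "finite (Z s q k) \<and> card (Z s q k) \<le> 12*n+3" if "s < n" "q < n" "k < tau" for s q k
    unfolding Z_def using pair_seg[OF that(1,2,3) _ pl] inc that(3) by blast
  have WB: "finite (W x) \<and> card (W x) \<le> 12*n+3" if "x \<in> X" for x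
  proof -
    define k s q where "k = fst x" and "s = fst (snd x)" and "q = snd (snd x)"
    have x: "x = (k,s,q)" "k < tau" "s < n" "q < n" using that unfolding X_def k_def s_def q_def
      by (auto simp: mem_Times_iff)
    have "card (W x) \<le> card (Z s q k)" unfolding W_def x by (simp add: card_image_le ZB[OF x(3,4,2)])
    thus ?thesis using ZB[OF x(3,4,2)] unfolding W_def x by simp
  qed
  have sub: "intersections d n tau tm P \<subseteq> (\<Union>x\<in>X. W x)"
  proof
    fix y assume y: "y \<in> intersections d n tau tm P"
    then obtain s q t where yy: "y = (s,q,t)" "s < q" "q < n"
      and iso: "isolated_pt t {x \<in> {tm 0..tm tau}. Dfun d n P s x = Dfun d n P q x}"
      unfolding intersections_def by auto
    have "t \<in> {tm 0..tm tau}" using iso unfolding isolated_pt_def by auto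
    then obtain k where k: "k < tau" "t \<in> {tm k..tm (Suc k)}" using seg_cover[OF inc tau] by blast
    have segsub: "{tm k..tm (Suc k)} \<subseteq> {tm 0..tm tau}"
      using mono_tm[OF inc, of 0 k] mono_tm[OF inc, of "Suc k" tau] k(1) by auto
    have tS: "t \<in> {x\<in>{tm k..tm (Suc k)}. Dfun d n P s x = Dfun d n P q x}"
      using iso k(2) unfolding isolated_pt_def by auto
    have "isolated_pt t {x\<in>{tm k..tm (Suc k)}. Dfun d n P s x = Dfun d n P q x}"
      by (rule iso_sub[OF iso tS]) (use segsub in auto)
    hence "t \<in> Z s q k" unfolding Z_def using k(2) by simp
    hence "y \<in> W (k,s,q)" unfolding W_def yy by simp
    moreover have "(k,s,q) \<in> X" unfolding X_def using yy k by auto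
    ultimately show "y \<in> (\<Union>x\<in>X. W x)" by blast
  qed
  have finU: "finite (\<Union>x\<in>X. W x)" using finX WB by blast
  have "card (intersections d n tau tm P) \<le> card (\<Union>x\<in>X. W x)" by (rule card_mono[OF finU sub])
  also have "\<dots> \<le> (\<Sum>x\<in>X. card (W x))" by (rule card_UN_le[OF finX])
  also have "\<dots> \<le> (\<Sum>x\<in>X. 12*n+3)" using WB by (intro sum_mono) blast
  also have "\<dots> = tau * (n * n) * (12*n+3)" unfolding X_def by (simp add: card_cartesian_product)
  also have "\<dots> \<le> 15 * tau * n^3"
  proof (cases "n = 0")
    case True thus ?thesis by simp
  next
    case False
    hence "12*n+3 \<le> 15*n" by simp
    hence "tau * (n * n) * (12*n+3) \<le> tau * (n * n) * (15*n)" by (rule mult_le_mono2)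
    thus ?thesis by (simp add: power3_eq_cube algebra_simps)
  qed
  finally have c: "card (intersections d n tau tm P) \<le> 15 * tau * n^3" .
  have "real (card (intersections d n tau tm P)) \<le> real (15 * tau * n^3)" using c by (rule of_nat_mono)
  hence "real (card (intersections d n tau tm P)) \<le> 15 * real tau * real n ^ 3" by simp
  moreover have "finite (intersections d n tau tm P)" using finite_subset[OF sub finU] .
  ultimately show "finite (intersections d n tau tm P) \<and> real (card (intersections d n tau tm P)) \<le> 15 * real tau * real n ^ 3"
    by simp
qed

end
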